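(* Let $a_n=a_n(123,\{1\},\{1,3\})$. Then $a_1=1$, $a_2=2$, and for $n>2$, $a_n=(n-1)a_{n-1}+(n-2)a_{n-2}$. Moreover, for all $n\ge1$, \[a_n=(n-1)!+\sum_{k=0}^{n-2}(-1)^{n-k}(k+1)!\binom{n-1}{k}=\frac{c_{n+1}}{n}=c_n+c_{n-1},\] where $c_m$ is the number of non-derangements of $[m]$ (permutations of $[m]$ with at least one fixed point), $c_m=m!\big(1-\sum_{k=0}^{m}\frac{(-1)^k}{k!}\big)$, with $c_0=0$.
   Context: For $n\ge1$, $\mathcal S_n$ is the set of permutations $\pi=\pi_1\cdots\pi_n$ of $[n]$. A bi-vincular pattern of length $k$ is a triple $p=(\sigma,X,Y)$ with $\sigma\in\mathcal S_k$ and $X,Y\subseteq\{0,1,\dots,k\}$. A permutation $\pi\in\mathcal S_n$ contains $p$ if there are indices $1\le i_1<\dots<i_k\le n$ such that $(\pi_{i_1},\dots,\pi_{i_k})$ is order-isomorphic to $\sigma$ and, letting $j_1<\dots<j_k$ be the values $\pi_{i_1},\dots,\pi_{i_k}$ sorted increasingly and setting $i_0=j_0=0$, $i_{k+1}=j_{k+1}=n+1$, one has $i_{x+1}=i_x+1$ for all $x\in X$ and $j_{y+1}=j_y+1$ for all $y\in Y$. Otherwise $\pi$ avoids $p$; $a_n(p)$ is the number of $\pi\in\mathcal S_n$ avoiding $p$. *)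

theory Defs
  imports Complex_Main "HOL-Combinatorics.Permutations"
begin

text \<open>A permutation pi of [n] is a function nat => nat with pi permutes {1..n};
  its one-line notation is pi 1, ..., pi n. A pattern sigma in S_k is likewise
  a function with sigma permutes {1..k}.\<close>

definition bv_contains ::
  "nat \<Rightarrow> (nat \<Rightarrow> nat) \<Rightarrow> nat \<Rightarrow> (nat \<Rightarrow> nat) \<Rightarrow> nat set \<Rightarrow> nat set \<Rightarrow> bool" where
  "bv_contains n \<pi> k \<sigma> X Y \<longleftrightarrow>
     (\<exists>idx :: nat \<Rightarrow> nat.
        (\<forall>a\<in>{1..k}. 1 \<le> idx a \<and> idx a \<le> n) \<and>
        (\<forall>a\<in>{1..k}. \<forall>b\<in>{1..k}. a < b \<longrightarrow> idx a < idx b) \<and>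
        (\<forall>a\<in>{1..k}. \<forall>b\<in>{1..k}. \<pi> (idx a) < \<pi> (idx b) \<longleftrightarrow> \<sigma> a < \<sigma> b) \<and>
        (let ie = (\<lambda>t. if t = 0 then 0 else if t = k + 1 then n + 1 else idx t);
             js = sorted_list_of_set ((\<lambda>a. \<pi> (idx a)) ` {1..k});
             je = (\<lambda>t. if t = 0 then 0 else if t = k + 1 then n + 1 else js ! (t - 1))
         in (\<forall>x\<in>X. ie (x + 1) = ie x + 1) \<and> (\<forall>y\<in>Y. je (y + 1) = je y + 1)))"

definition bv_avoid_count :: "nat \<Rightarrow> nat \<Rightarrow> (nat \<Rightarrow> nat) \<Rightarrow> nat set \<Rightarrow> nat set \<Rightarrow> nat" where
  "bv_avoid_count n k \<sigma> X Y = card {\<pi>. \<pi> permutes {1..n} \<and> \<not> bv_contains n \<pi> k \<sigma> X Y}"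

definition non_derangements :: "nat \<Rightarrow> nat" where
  "non_derangements m = card {\<pi>. \<pi> permutes {1..m} \<and> (\<exists>i\<in>{1..m}. \<pi> i = i)}"

end

theory Submission
  imports Defs "HOL-Combinatorics.Multiset_Permutations"
begin


lemma sl3: assumes "(a::nat) < b" "b < c" shows "sorted_list_of_set {a,b,c} = [a,b,c]"
proof -
  have "sorted_list_of_set {a,b,c} = sorted_list_of_set (set [a,b,c])" by simp
  also have "\<dots> = sort (remdups [a,b,c])" by (rule sorted_list_of_set_sort_remdups)
  also have "remdups [a,b,c] = [a,b,c]" using assms by simp
  also have "sort [a,b,c] = [a,b,c]" using assms by (intro sorted_sort_id) simp
  finally show ?thesis .
qed

lemma cont_char:
  assumes "\<pi> permutes {1..n}"
  shows "bv_contains n \<pi> 3 id {1} {1,3} \<longleftrightarrow>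
    (\<exists>i j. 1 \<le> i \<and> i+1 < j \<and> j \<le> n \<and> \<pi> (i+1) = \<pi> i + 1 \<and> \<pi> j = n)"
proof
  assume "bv_contains n \<pi> 3 id {1} {1,3}"
  then obtain idx where all: "(\<forall>a\<in>{1..3}. 1 \<le> idx a \<and> idx a \<le> n) \<and>
    (\<forall>a\<in>{1..3}. \<forall>b\<in>{1..3}. a < b \<longrightarrow> idx a < idx b) \<and>
    (\<forall>a\<in>{1..3::nat}. \<forall>b\<in>{1..3}. \<pi> (idx a) < \<pi> (idx b) \<longleftrightarrow> id a < id b) \<and>
    (let ie = (\<lambda>t. if t = 0 then 0 else if t = 3 + 1 then n + 1 else idx t);
             js = sorted_list_of_set ((\<lambda>a. \<pi> (idx a)) ` {1..3});
             je = (\<lambda>t. if t = 0 then 0 else if t = 3 + 1 then n + 1 else js ! (t - 1))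
         in (\<forall>x\<in>{1}. ie (x + 1) = ie x + 1) \<and> (\<forall>y\<in>{1,3}. je (y + 1) = je y + 1))"
    unfolding bv_contains_def by (rule exE)
  note b = conjunct1[OF all] and inc = conjunct1[OF conjunct2[OF all]]
    and ord = conjunct1[OF conjunct2[OF conjunct2[OF all]]] and rest = conjunct2[OF conjunct2[OF conjunct2[OF all]]]
  have s3: "{1..3::nat} = {1,2,3}" by auto
  define p q r where "p = idx 1" and "q = idx 2" and "r = idx 3"
  have t2: "Suc (Suc 0) = (2::nat)" "Suc 1 = (2::nat)" "Suc 2 = (3::nat)" "Suc (Suc (Suc 0)) = (3::nat)" "Suc 0 = (1::nat)" by simp_all
  have e: "idx 1 = p" "idx (Suc 0) = p" "idx 2 = q" "idx (Suc (Suc 0)) = q" "idx (Suc 1) = q" "idx 3 = r" "idx (Suc 2) = r" "idx (Suc (Suc (Suc 0))) = r"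
    by (simp_all only: p_def q_def r_def t2)
  have o12: "\<pi> p < \<pi> q" and o23: "\<pi> q < \<pi> r" using ord unfolding s3 by (simp_all add: e)
  have im: "(\<lambda>a. \<pi> (idx a)) ` {1..3} = {\<pi> p, \<pi> q, \<pi> r}"
    unfolding s3 by (simp add: e)
  have js: "sorted_list_of_set ((\<lambda>a. \<pi> (idx a)) ` {1..3}) = [\<pi> p, \<pi> q, \<pi> r]"
    unfolding im using o12 o23 by (rule sl3)
  have "q = p + 1 \<and> \<pi> q = \<pi> p + 1 \<and> n + 1 = \<pi> r + 1"
    using rest unfolding Let_def js apply (simp add: e) apply (elim conjE) by simp
  moreover have "1 \<le> p" "r \<le> n" "q < r" using b inc unfolding s3 by (simp_all add: e)
  ultimately show "\<exists>i j. 1 \<le> i \<and> i+1 < j \<and> j \<le> n \<and> \<pi> (i+1) = \<pi> i + 1 \<and> \<pi> j = n"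
    by (intro exI[of _ p] exI[of _ r]) auto
next
  assume "\<exists>i j. 1 \<le> i \<and> i+1 < j \<and> j \<le> n \<and> \<pi> (i+1) = \<pi> i + 1 \<and> \<pi> j = n"
  then obtain i j where ij: "1 \<le> i" "i+1 < j" "j \<le> n" "\<pi> (i+1) = \<pi> i + 1" "\<pi> j = n" by blast
  define idx where "idx = (\<lambda>a::nat. if a = 1 then i else if a = 2 then i + 1 else j)"
  have ne: "\<pi> (i+1) \<noteq> \<pi> j" using ij(2) injD[OF permutes_inj[OF assms]] by fastforce
  have le: "\<pi> (i+1) \<le> n" using permutes_in_image[OF assms, of "i+1"] ij by auto
  have v: "\<pi> i < \<pi> (i+1)" "\<pi> (i+1) < \<pi> j" using ij ne le by auto
  have s3: "{1..3::nat} = {1,2,3}" by auto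
  have im: "(\<lambda>a. \<pi> (idx a)) ` {1..3} = {\<pi> i, \<pi> (i+1), \<pi> j}"
    unfolding s3 idx_def by auto
  have js: "sorted_list_of_set ((\<lambda>a. \<pi> (idx a)) ` {1..3}) = [\<pi> i, \<pi> (i+1), \<pi> j]"
    unfolding im using v by (rule sl3)
  have i1: "idx 1 = i" "idx 2 = i + 1" "idx 3 = j" "idx (Suc 0) = i" "idx (Suc (Suc 0)) = i + 1" by (auto simp: idx_def)
  have A: "\<forall>a\<in>{1..3}. 1 \<le> idx a \<and> idx a \<le> n" unfolding s3 using ij by (simp add: i1)
  have B: "\<forall>a\<in>{1..3}. \<forall>b\<in>{1..3}. a < b \<longrightarrow> idx a < idx b" unfolding s3 using ij by (simp add: i1)
  have C: "\<forall>a\<in>{1..3::nat}. \<forall>b\<in>{1..3}. \<pi> (idx a) < \<pi> (idx b) \<longleftrightarrow> id a < id b"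
    unfolding s3 using v by (simp add: i1)
  have D: "(let ie = (\<lambda>t. if t = 0 then 0 else if t = 3 + 1 then n + 1 else idx t);
             js = sorted_list_of_set ((\<lambda>a. \<pi> (idx a)) ` {1..3});
             je = (\<lambda>t. if t = 0 then 0 else if t = 3 + 1 then n + 1 else js ! (t - 1))
         in (\<forall>x\<in>{1}. ie (x + 1) = ie x + 1) \<and> (\<forall>y\<in>{1,3}. je (y + 1) = je y + 1))"
    unfolding Let_def js using ij by (simp add: i1)
  show "bv_contains n \<pi> 3 id {1} {1,3}"
    apply (rule iffD2[OF bv_contains_def])
    apply (rule exI[of _ idx])
    apply (rule conjI, rule A)
    apply (rule conjI, rule B)
    apply (rule conjI, rule C)
    by (rule D)
qed



declare upt_Suc[simp del]

definition perms :: "nat \<Rightarrow> nat list set" where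
  "perms m = {xs. distinct xs \<and> set xs = {1..m}}"

lemma perms_eq: "perms m = permutations_of_set {1..m}"
  by (auto simp: perms_def permutations_of_set_def)

lemma finite_perms[simp]: "finite (perms m)" by (simp add: perms_eq)
lemma card_perms: "card (perms m) = fact m" by (simp add: perms_eq)
lemma length_perms: "xs \<in> perms m \<Longrightarrow> length xs = m"
  by (auto simp: perms_def dest: distinct_card)

definition avoidL :: "nat \<Rightarrow> nat list \<Rightarrow> bool" where
  "avoidL n xs \<longleftrightarrow> \<not>(\<exists>i j. Suc i < j \<and> j < length xs \<and> xs!Suc i = Suc (xs!i) \<and> xs!j = n)"

lemma L_perm:
  assumes "\<pi> permutes {1..n}" shows "map \<pi> [1..<Suc n] \<in> perms n"
proof -
  have "inj_on \<pi> (set [1..<Suc n])" using permutes_inj[OF assms] by (rule inj_on_subset) simp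
  moreover have "set (map \<pi> [1..<Suc n]) = {1..n}"
    using permutes_image[OF assms] by (simp add: atLeastLessThanSuc_atLeastAtMost)
  ultimately show ?thesis by (simp add: perms_def distinct_map)
qed

lemma L_inj: "inj_on (\<lambda>\<pi>. map \<pi> [1..<Suc n]) {\<pi>. \<pi> permutes {1..n}}"
proof (rule inj_onI)
  fix \<pi> \<sigma> assume p: "\<pi> \<in> {\<pi>. \<pi> permutes {1..n}}" and s: "\<sigma> \<in> {\<pi>. \<pi> permutes {1..n}}"
    and eq: "map \<pi> [1..<Suc n] = map \<sigma> [1..<Suc n]"
  show "\<pi> = \<sigma>"
  proof
    fix x show "\<pi> x = \<sigma> x"
    proof (cases "x \<in> {1..n}")
      case True
      then have "x \<in> set [1..<Suc n]" by (simp add: atLeastLessThanSuc_atLeastAtMost)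
      then show ?thesis using eq by (metis map_eq_conv)
    next
      case False
      then show ?thesis using p s by (simp add: permutes_not_in)
    qed
  qed
qed

lemma L_image: "(\<lambda>\<pi>. map \<pi> [1..<Suc n]) ` {\<pi>. \<pi> permutes {1..n}} = perms n"
proof (rule card_subset_eq)
  show "finite (perms n)" by simp
  show "(\<lambda>\<pi>. map \<pi> [1..<Suc n]) ` {\<pi>. \<pi> permutes {1..n}} \<subseteq> perms n" using L_perm by auto
  show "card ((\<lambda>\<pi>. map \<pi> [1..<Suc n]) ` {\<pi>. \<pi> permutes {1..n}}) = card (perms n)"
    using card_image[OF L_inj[of n]] card_permutations[of "{1..n}" n] by (simp add: card_perms)
qed

lemma cont_list:
  assumes "\<pi> permutes {1..n}"
  shows "(\<exists>i j. 1 \<le> i \<and> i+1 < j \<and> j \<le> n \<and> \<pi> (i+1) = \<pi> i + 1 \<and> \<pi> j = n)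
     \<longleftrightarrow> \<not> avoidL n (map \<pi> [1..<Suc n])"
proof
  assume "\<exists>i j. 1 \<le> i \<and> i+1 < j \<and> j \<le> n \<and> \<pi> (i+1) = \<pi> i + 1 \<and> \<pi> j = n"
  then obtain i j where ij: "1 \<le> i" "i+1 < j" "j \<le> n" "\<pi> (i+1) = \<pi> i + 1" "\<pi> j = n" by blast
  obtain i' where i': "i = Suc i'" using ij(1) by (cases i) auto
  obtain j' where j': "j = Suc j'" using ij(2) by (cases j) auto
  show "\<not> avoidL n (map \<pi> [1..<Suc n])" unfolding avoidL_def
    apply (rule notI, erule notE)
    apply (rule exI[of _ i'], rule exI[of _ j'])
    using ij i' j' by (simp add: nth_upt)
next
  assume "\<not> avoidL n (map \<pi> [1..<Suc n])"
  then obtain i j where ij: "Suc i < j" "j < n" "map \<pi> [1..<Suc n] ! Suc i = Suc (map \<pi> [1..<Suc n] ! i)"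
     "map \<pi> [1..<Suc n] ! j = n" unfolding avoidL_def by auto
  show "\<exists>i j. 1 \<le> i \<and> i+1 < j \<and> j \<le> n \<and> \<pi> (i+1) = \<pi> i + 1 \<and> \<pi> j = n"
    apply (rule exI[of _ "Suc i"], rule exI[of _ "Suc j"])
    using ij by (simp add: nth_upt)
qed

definition nsucc :: "nat \<Rightarrow> nat list \<Rightarrow> bool" where
  "nsucc t xs \<longleftrightarrow> (\<forall>i<t. Suc i < length xs \<longrightarrow> xs!Suc i \<noteq> Suc (xs!i))"

definition E :: "nat \<Rightarrow> nat \<Rightarrow> nat" where
  "E m t = card {xs \<in> perms m. nsucc t xs}"

definition ins :: "nat \<Rightarrow> nat \<Rightarrow> nat list \<Rightarrow> nat list" where
  "ins n p ys = take p ys @ n # drop p ys"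

definition del :: "nat \<Rightarrow> nat list \<Rightarrow> nat list" where
  "del p xs = take p xs @ drop (Suc p) xs"

lemma del_ins: "p \<le> length ys \<Longrightarrow> del p (ins n p ys) = ys"
  by (simp add: del_def ins_def)

lemma ins_del: "p < length xs \<Longrightarrow> xs ! p = n \<Longrightarrow> ins n p (del p xs) = xs"
  unfolding del_def ins_def using id_take_nth_drop[of p xs] by simp

lemma set_del:
  assumes "distinct xs" "p < length xs"
  shows "set (del p xs) = set xs - {xs!p}" "distinct (del p xs)"
proof -
  have xs: "xs = take p xs @ xs!p # drop (Suc p) xs" using assms by (simp add: id_take_nth_drop)
  from assms(1) have d: "distinct (take p xs @ xs!p # drop (Suc p) xs)" by (simp only: xs[symmetric])
  have sx: "set xs = set (take p xs) \<union> {xs!p} \<union> set (drop (Suc p) xs)"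
    by (subst xs) (simp only: set_append list.set, blast)
  show "set (del p xs) = set xs - {xs!p}" using d unfolding sx del_def by auto
  show "distinct (del p xs)" using d unfolding del_def by auto
qed

lemma ins_perm:
  assumes "ys \<in> perms m" "p \<le> m"
  shows "ins (Suc m) p ys \<in> perms (Suc m)" "ins (Suc m) p ys ! p = Suc m"
    "length (ins (Suc m) p ys) = Suc m"
proof -
  have l: "length ys = m" using assms length_perms by auto
  have ys: "distinct ys" "set ys = {1..m}" using assms by (auto simp: perms_def)
  have "Suc m \<notin> set ys" using ys by auto
  moreover have "distinct (take p ys @ drop p ys)" using ys(1) by simp
  ultimately have "distinct (ins (Suc m) p ys)" unfolding ins_def
    by (simp only: distinct_append distinct.simps set_append list.set) (blast dest: in_set_takeD in_set_dropD)
  moreover have "set (take p ys) \<union> set (drop p ys) = set ys"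
    by (metis set_append append_take_drop_id)
  then have "set (ins (Suc m) p ys) = {1..Suc m}"
    unfolding ins_def using ys(2) by auto
  ultimately show "ins (Suc m) p ys \<in> perms (Suc m)" by (simp add: perms_def)
  show "ins (Suc m) p ys ! p = Suc m" using l assms(2) by (simp add: ins_def nth_append)
  show "length (ins (Suc m) p ys) = Suc m" using l assms(2) by (simp add: ins_def)
qed

lemma ins_avoid:
  assumes "ys \<in> perms m" "p \<le> m"
  shows "avoidL (Suc m) (ins (Suc m) p ys) \<longleftrightarrow> nsucc (p - 1) ys"
proof -
  note I = ins_perm[OF assms]
  have l: "length ys = m" using assms length_perms by auto
  have dI: "distinct (ins (Suc m) p ys)" using I(1) by (simp add: perms_def)
  have jp: "j < Suc m \<Longrightarrow> ins (Suc m) p ys ! j = Suc m \<longleftrightarrow> j = p" for j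
    using nth_eq_iff_index_eq[OF dI, of j p] I(2,3) assms(2) by auto
  have nth: "i < p \<Longrightarrow> ins (Suc m) p ys ! i = ys ! i" for i
    using l assms(2) by (simp add: ins_def nth_append)
  have "avoidL (Suc m) (ins (Suc m) p ys) \<longleftrightarrow> (\<forall>i. Suc i < p \<longrightarrow> ins (Suc m) p ys ! Suc i \<noteq> Suc (ins (Suc m) p ys ! i))"
  proof -
    have "(\<exists>i j. Suc i < j \<and> j < Suc m \<and> ins (Suc m) p ys ! Suc i = Suc (ins (Suc m) p ys ! i) \<and> ins (Suc m) p ys ! j = Suc m)
       \<longleftrightarrow> (\<exists>i. Suc i < p \<and> ins (Suc m) p ys ! Suc i = Suc (ins (Suc m) p ys ! i))"
    proof
      assume "\<exists>i j. Suc i < j \<and> j < Suc m \<and> ins (Suc m) p ys ! Suc i = Suc (ins (Suc m) p ys ! i) \<and> ins (Suc m) p ys ! j = Suc m"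
      then obtain i j where "Suc i < j" "j < Suc m" "ins (Suc m) p ys ! Suc i = Suc (ins (Suc m) p ys ! i)" "ins (Suc m) p ys ! j = Suc m"
        by blast
      then show "\<exists>i. Suc i < p \<and> ins (Suc m) p ys ! Suc i = Suc (ins (Suc m) p ys ! i)" using jp by blast
    next
      assume "\<exists>i. Suc i < p \<and> ins (Suc m) p ys ! Suc i = Suc (ins (Suc m) p ys ! i)"
      then obtain i where "Suc i < p" "ins (Suc m) p ys ! Suc i = Suc (ins (Suc m) p ys ! i)" by blast
      then show "\<exists>i j. Suc i < j \<and> j < Suc m \<and> ins (Suc m) p ys ! Suc i = Suc (ins (Suc m) p ys ! i) \<and> ins (Suc m) p ys ! j = Suc m"
        using I(2) assms(2) by (intro exI[of _ i] exI[of _ p]) auto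
    qed
    then show ?thesis unfolding avoidL_def I(3) by blast
  qed
  also have "\<dots> \<longleftrightarrow> (\<forall>i. Suc i < p \<longrightarrow> ys ! Suc i \<noteq> Suc (ys ! i))"
    using nth by auto
  also have "\<dots> \<longleftrightarrow> nsucc (p - 1) ys"
    unfolding nsucc_def l using assms(2) by (auto simp: less_diff_conv)
  finally show ?thesis .
qed

lemma avoid_split:
  "card {xs \<in> perms (Suc m). avoidL (Suc m) xs} = (\<Sum>p<Suc m. E m (p - 1))"
proof -
  define S where "S p = {xs \<in> perms (Suc m). avoidL (Suc m) xs \<and> xs ! p = Suc m}" for p
  have U: "{xs \<in> perms (Suc m). avoidL (Suc m) xs} = (\<Union>p<Suc m. S p)"
  proof (rule set_eqI, rule iffI)
    fix xs assume xs: "xs \<in> {xs \<in> perms (Suc m). avoidL (Suc m) xs}"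
    then have "Suc m \<in> set xs" "length xs = Suc m" by (auto simp: perms_def length_perms)
    then obtain p where "p < Suc m" "xs ! p = Suc m" by (metis in_set_conv_nth)
    then show "xs \<in> (\<Union>p<Suc m. S p)" using xs by (auto simp: S_def)
  qed (auto simp: S_def)
  have D: "\<forall>p\<in>{..<Suc m}. \<forall>q\<in>{..<Suc m}. p \<noteq> q \<longrightarrow> S p \<inter> S q = {}"
  proof (intro ballI impI)
    fix p q assume pq: "p \<in> {..<Suc m}" "q \<in> {..<Suc m}" "p \<noteq> q"
    show "S p \<inter> S q = {}"
    proof (rule ccontr)
      assume "S p \<inter> S q \<noteq> {}"
      then obtain xs where "xs \<in> S p" "xs \<in> S q" by blast
      then have "distinct xs" "length xs = Suc m" "xs ! p = xs ! q" by (auto simp: S_def perms_def length_perms)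
      then show False using pq nth_eq_iff_index_eq[of xs p q] by auto
    qed
  qed
  have C: "card (S p) = E m (p - 1)" if "p < Suc m" for p
  proof -
    have "S p = ins (Suc m) p ` {ys \<in> perms m. nsucc (p - 1) ys}"
    proof (rule set_eqI, rule iffI)
      fix xs assume "xs \<in> S p"
      then have xs: "xs \<in> perms (Suc m)" "avoidL (Suc m) xs" "xs ! p = Suc m" by (auto simp: S_def)
      have l: "length xs = Suc m" using xs(1) length_perms by auto
      have dx: "distinct xs" "set xs = {1..Suc m}" using xs(1) by (auto simp: perms_def)
      have pl: "p < length xs" using l that by simp
      have "set (del p xs) = {1..Suc m} - {Suc m}" using set_del(1)[OF dx(1) pl] xs(3) dx(2) by simp
      also have "\<dots> = {1..m}" by auto
      finally have dp: "del p xs \<in> perms m" using set_del(2)[OF dx(1) pl] by (simp add: perms_def)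
      have e: "ins (Suc m) p (del p xs) = xs" using ins_del l that xs(3) by simp
      have "nsucc (p - 1) (del p xs)" using ins_avoid[OF dp, of p] that e xs(2) by simp
      then show "xs \<in> ins (Suc m) p ` {ys \<in> perms m. nsucc (p - 1) ys}"
        using dp e by (metis (mono_tags, lifting) image_eqI mem_Collect_eq)
    next
      fix xs assume "xs \<in> ins (Suc m) p ` {ys \<in> perms m. nsucc (p - 1) ys}"
      then obtain ys where ys: "ys \<in> perms m" "nsucc (p - 1) ys" "xs = ins (Suc m) p ys" by auto
      then show "xs \<in> S p" using ins_perm[OF ys(1), of p] ins_avoid[OF ys(1), of p] that
        by (auto simp: S_def)
    qed
    moreover have "inj_on (ins (Suc m) p) {ys \<in> perms m. nsucc (p - 1) ys}"
      by (rule inj_on_inverseI[of _ "del p"]) (use that length_perms del_ins in auto)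
    ultimately show ?thesis by (simp add: card_image E_def)
  qed
  have "card (\<Union>p<Suc m. S p) = (\<Sum>p<Suc m. card (S p))"
    by (rule card_UN_disjoint[OF _ _ D]) (auto simp: S_def)
  then show ?thesis using U C by simp
qed

definition incv :: "nat \<Rightarrow> nat \<Rightarrow> nat" where "incv x y = (if x < y then Suc y else y)"
definition decv :: "nat \<Rightarrow> nat \<Rightarrow> nat" where "decv x y = (if x < y then y - 1 else y)"

definition gl :: "nat \<Rightarrow> nat list \<Rightarrow> nat list" where
  "gl t ys = ins (Suc (ys!t)) (Suc t) (map (incv (ys!t)) ys)"
definition ct :: "nat \<Rightarrow> nat list \<Rightarrow> nat list" where
  "ct t xs = map (decv (xs!t)) (del (Suc t) xs)"

lemma ins_distinct_set:
  assumes "distinct zs" "v \<notin> set zs"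
  shows "distinct (ins v p zs)" "set (ins v p zs) = insert v (set zs)"
proof -
  have "distinct (take p zs @ drop p zs)" using assms(1) by simp
  then show "distinct (ins v p zs)" using assms(2) unfolding ins_def
    by (simp only: distinct_append distinct.simps set_append list.set) (blast dest: in_set_takeD in_set_dropD)
  have "set (take p zs) \<union> set (drop p zs) = set zs"
    by (metis set_append append_take_drop_id)
  then show "set (ins v p zs) = insert v (set zs)" unfolding ins_def by auto
qed

lemma ins_nth_lt: "i < p \<Longrightarrow> p \<le> length zs \<Longrightarrow> ins v p zs ! i = zs ! i"
  by (simp add: ins_def nth_append)
lemma ins_nth_eq: "p \<le> length zs \<Longrightarrow> ins v p zs ! p = v"
  by (simp add: ins_def nth_append)
lemma ins_length: "p \<le> length zs \<Longrightarrow> length (ins v p zs) = Suc (length zs)"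
  by (simp add: ins_def)
lemma del_nth_lt: "i < p \<Longrightarrow> del p xs ! i = xs ! i"
  by (cases "i < length xs") (auto simp: del_def nth_append)

lemma dec_inc[simp]: "decv x (incv x y) = y" by (simp add: decv_def incv_def)
lemma inc_dec: "y \<noteq> Suc x \<Longrightarrow> incv x (decv x y) = y" by (auto simp: decv_def incv_def)

lemma inc_image: "x \<in> {1..k} \<Longrightarrow> insert (Suc x) (incv x ` {1..k}) = {1..Suc k}"
proof (rule set_eqI, rule iffI)
  fix y assume x: "x \<in> {1..k}" and y: "y \<in> {1..Suc k}"
  show "y \<in> insert (Suc x) (incv x ` {1..k})"
  proof (cases "y \<le> x")
    case True then have "y = incv x y" by (simp add: incv_def)
    then show ?thesis using True x y by auto
  next
    case False
    show ?thesis
    proof (cases "y = Suc x")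
      case False
      with \<open>\<not> y \<le> x\<close> have "y = incv x (y - 1)" "y - 1 \<in> {1..k}" using x y by (auto simp: incv_def)
      then show ?thesis by blast
    qed simp
  qed
qed (auto simp: incv_def)

lemma dec_image: "x \<in> {1..k} \<Longrightarrow> decv x ` ({1..Suc k} - {Suc x}) = {1..k}"
proof -
  assume x: "x \<in> {1..k}"
  have "decv x ` ({1..Suc k} - {Suc x}) = decv x ` (insert (Suc x) (incv x ` {1..k}) - {Suc x})"
    using inc_image[OF x] by simp
  also have "insert (Suc x) (incv x ` {1..k}) - {Suc x} = incv x ` {1..k}"
    by (auto simp: incv_def split: if_splits)
  also have "decv x ` (incv x ` {1..k}) = {1..k}" by (simp add: image_image)
  finally show ?thesis .
qed

lemma inj_incv: "inj (incv x)"
  by (rule inj_onI) (auto simp: incv_def split: if_splits)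

lemma inj_decv: "inj_on (decv x) (- {Suc x})"
  by (rule inj_onI) (auto simp: decv_def split: if_splits)

lemma nsucc_Suc: "nsucc (Suc t) xs \<longleftrightarrow> nsucc t xs \<and> (Suc t < length xs \<longrightarrow> xs!Suc t \<noteq> Suc (xs!t))"
  unfolding nsucc_def by (auto simp: less_Suc_eq)

lemma gl_props:
  assumes ys: "ys \<in> perms k" "nsucc t ys" and t: "t < k"
  shows "gl t ys \<in> perms (Suc k)" "nsucc t (gl t ys)" "gl t ys ! Suc t = Suc (gl t ys ! t)"
    "ct t (gl t ys) = ys"
proof -
  have l: "length ys = k" using ys length_perms by auto
  have d: "distinct ys" "set ys = {1..k}" using ys by (auto simp: perms_def)
  define x where "x = ys ! t"
  have x: "x \<in> {1..k}" using d(2) t l x_def nth_mem by blast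
  define zs where "zs = map (incv x) ys"
  have g: "gl t ys = ins (Suc x) (Suc t) zs" by (simp add: gl_def x_def zs_def)
  have lz: "length zs = k" using l zs_def by simp
  have dz: "distinct zs" using d(1) by (simp add: zs_def distinct_map inj_on_subset[OF inj_incv subset_UNIV])
  have sz: "set zs = incv x ` {1..k}" using d(2) by (simp add: zs_def)
  have nz: "Suc x \<notin> set zs" unfolding sz by (auto simp: incv_def split: if_splits)
  show "gl t ys \<in> perms (Suc k)"
    unfolding g perms_def using ins_distinct_set[OF dz nz, of "Suc t"] inc_image[OF x] sz by simp
  have st: "Suc t \<le> length zs" using lz t by simp
  have gt: "gl t ys ! t = x" using ins_nth_lt[OF _ st] lz t unfolding g zs_def x_def by (simp add: incv_def)
  have gst: "gl t ys ! Suc t = Suc x" unfolding g using ins_nth_eq[OF st] .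
  show "gl t ys ! Suc t = Suc (gl t ys ! t)" using gt gst by simp
  show "nsucc t (gl t ys)"
    unfolding nsucc_def
  proof (intro allI impI)
    fix i assume i: "i < t" "Suc i < length (gl t ys)"
    have a: "gl t ys ! i = incv x (ys ! i)" "gl t ys ! Suc i = incv x (ys ! Suc i)"
      using ins_nth_lt[OF _ st] i l t unfolding g zs_def by auto
    have "ys ! i \<noteq> x" using nth_eq_iff_index_eq[OF d(1), of i t] i t l x_def by auto
    moreover have "ys ! Suc i \<noteq> Suc (ys ! i)" using ys(2) i t l unfolding nsucc_def by auto
    ultimately show "gl t ys ! Suc i \<noteq> Suc (gl t ys ! i)" unfolding a incv_def by auto
  qed
  have "del (Suc t) (gl t ys) = zs" unfolding g using del_ins[OF st] .
  then show "ct t (gl t ys) = ys" unfolding ct_def gt by (simp add: zs_def comp_def)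
qed

lemma ct_props:
  assumes xs: "xs \<in> perms (Suc k)" "nsucc t xs" "xs ! Suc t = Suc (xs ! t)" and t: "t < k"
  shows "ct t xs \<in> perms k" "nsucc t (ct t xs)" "gl t (ct t xs) = xs"
proof -
  have l: "length xs = Suc k" using xs length_perms by auto
  have d: "distinct xs" "set xs = {1..Suc k}" using xs by (auto simp: perms_def)
  define x where "x = xs ! t"
  have st: "Suc t < length xs" using l t by simp
  have "Suc x \<in> {1..Suc k}" using d(2) st xs(3) x_def nth_mem by (metis)
  then have x: "x \<in> {1..k}" using x_def d(2) st nth_mem by fastforce
  define zs where "zs = del (Suc t) xs"
  have sz: "set zs = {1..Suc k} - {Suc x}" using set_del(1)[OF d(1) st] xs(3) d(2) x_def zs_def by simp
  have dz: "distinct zs" using set_del(2)[OF d(1) st] zs_def by simp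
  have c: "ct t xs = map (decv x) zs" by (simp add: ct_def x_def zs_def)
  have "inj_on (decv x) (set zs)" using inj_decv by (rule inj_on_subset) (auto simp: sz)
  then show "ct t xs \<in> perms k" unfolding c perms_def using dz dec_image[OF x] sz by (simp add: distinct_map)
  show "nsucc t (ct t xs)"
    unfolding nsucc_def
  proof (intro allI impI)
    fix i assume i: "i < t" "Suc i < length (ct t xs)"
    have lz: "length zs = k" using l st zs_def by (simp add: del_def)
    have a: "ct t xs ! i = decv x (xs ! i)" "ct t xs ! Suc i = decv x (xs ! Suc i)"
      using i t lz unfolding c zs_def by (auto simp: del_nth_lt)
    have "xs ! i \<noteq> x" using nth_eq_iff_index_eq[OF d(1), of i t] i st x_def by auto
    moreover have "xs ! i \<noteq> Suc x" using nth_eq_iff_index_eq[OF d(1), of i "Suc t"] i st xs(3) x_def by auto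
    moreover have "xs ! Suc i \<noteq> Suc x" using nth_eq_iff_index_eq[OF d(1), of "Suc i" "Suc t"] i st xs(3) x_def by auto
    moreover have "xs ! Suc i \<noteq> Suc (xs ! i)" using xs(2) i t st unfolding nsucc_def by auto
    ultimately show "ct t xs ! Suc i \<noteq> Suc (ct t xs ! i)" unfolding a decv_def by auto
  qed
  have lz: "length zs = k" using l st zs_def by (simp add: del_def)
  have ctt: "ct t xs ! t = x" unfolding c using t lz by (simp add: zs_def del_nth_lt decv_def x_def)
  have "map (incv x) (ct t xs) = zs" unfolding c map_map
  proof (rule map_idI)
    fix y assume "y \<in> set zs"
    then have "y \<noteq> Suc x" using sz by blast
    then show "(incv x \<circ> decv x) y = y" by (simp add: inc_dec)
  qed
  then have "gl t (ct t xs) = ins (Suc x) (Suc t) zs" by (simp add: gl_def ctt)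
  also have "\<dots> = xs" unfolding zs_def using ins_del[OF st] xs(3) x_def by simp
  finally show "gl t (ct t xs) = xs" .
qed

lemma E_rec:
  assumes "t < k"
  shows "E (Suc k) t = E (Suc k) (Suc t) + E k t"
proof -
  define B where "B = {xs \<in> perms (Suc k). nsucc t xs \<and> xs ! Suc t = Suc (xs ! t)}"
  have U: "{xs \<in> perms (Suc k). nsucc t xs} = {xs \<in> perms (Suc k). nsucc (Suc t) xs} \<union> B"
    using assms by (auto simp: B_def nsucc_Suc length_perms)
  have I: "{xs \<in> perms (Suc k). nsucc (Suc t) xs} \<inter> B = {}"
    using assms by (auto simp: B_def nsucc_Suc length_perms)
  have "bij_betw (ct t) B {ys \<in> perms k. nsucc t ys}"
    by (rule bij_betw_byWitness[where f'="gl t"]) (use gl_props ct_props assms in \<open>auto simp: B_def\<close>)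
  then have "card B = E k t" by (simp add: bij_betw_same_card E_def)
  moreover have fB: "finite B" by (simp add: B_def)
  then show ?thesis using \<open>card B = E k t\<close> unfolding E_def U by (subst card_Un_disjoint) (use I in auto)
qed



definition h :: "nat \<Rightarrow> nat \<Rightarrow> int" where
  "h m t = (\<Sum>j\<le>t. (-1)^j * int (t choose j) * fact (m - j))"

lemma h_real: "real_of_int (h m m) = fact m * (\<Sum>k\<le>m. (-1)^k / fact k)"
proof -
  have "real_of_int (h m m) = (\<Sum>j\<le>m. (-1)^j * (real (m choose j) * fact (m - j)))"
    by (simp add: h_def of_int_sum mult.assoc)
  also have "\<dots> = (\<Sum>j\<le>m. fact m * ((-1)^j / fact j))"
  proof (rule sum.cong)
    fix j assume "j \<in> {..m}"
    then have "real (m choose j) * fact (m - j) = fact m / fact j"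
      by (simp add: binomial_fact)
    then show "(-1)^j * (real (m choose j) * fact (m - j)) = fact m * ((-1)^j / fact j)" by simp
  qed simp
  finally show ?thesis by (simp add: sum_distrib_left)
qed

lemma sum_pow_card:
  assumes "finite A"
  shows "(\<Sum>F\<in>Pow A. (g (card F) :: int)) = (\<Sum>j\<le>card A. int (card A choose j) * g j)"
proof -
  define S where "S j = {F. F \<subseteq> A \<and> card F = j}" for j
  have P: "Pow A = (\<Union>j\<le>card A. S j)"
    using assms by (auto simp: S_def card_mono)
  have fS: "finite (S j)" for j using assms by (simp add: S_def)
  have "(\<Sum>F\<in>Pow A. g (card F)) = (\<Sum>j\<le>card A. \<Sum>F\<in>S j. g (card F))"
    unfolding P apply (rule sum.UNION_disjoint) apply simp apply (simp add: fS) by (auto simp: S_def)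
  also have "\<dots> = (\<Sum>j\<le>card A. int (card A choose j) * g j)"
  proof (rule sum.cong)
    fix j
    have "(\<Sum>F\<in>S j. g (card F)) = (\<Sum>F\<in>S j. g j)" by (rule sum.cong) (auto simp: S_def)
    also have "\<dots> = int (card (S j)) * g j" by simp
    also have "card (S j) = card A choose j" unfolding S_def by (rule n_subsets[OF assms])
    finally show "(\<Sum>F\<in>S j. g (card F)) = int (card A choose j) * g j" .
  qed simp
  finally show ?thesis .
qed

lemma inversion: "(\<Sum>j\<le>m. int (m choose j) * h (m - j) (m - j)) = fact m"
proof -
  define u :: "nat \<Rightarrow> nat \<Rightarrow> real" where "u j k = fact m * (1 / fact j) * ((-1)^k / fact k)" for j k
  have "real_of_int (\<Sum>j\<le>m. int (m choose j) * h (m - j) (m - j))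
      = (\<Sum>j\<le>m. real (m choose j) * (fact (m - j) * (\<Sum>k\<le>m - j. (-1)^k / fact k)))"
    by (simp add: of_int_sum h_real)
  also have "\<dots> = (\<Sum>j\<le>m. \<Sum>k\<le>m - j. u j k)"
  proof (rule sum.cong)
    fix j assume "j \<in> {..m}"
    then have "real (m choose j) * fact (m - j) = fact m / fact j"
      by (simp add: binomial_fact)
    then show "real (m choose j) * (fact (m - j) * (\<Sum>k\<le>m - j. (-1)^k / fact k)) = (\<Sum>k\<le>m - j. u j k)"
      by (simp add: u_def sum_distrib_left mult.assoc[symmetric])
  qed simp
  also have "\<dots> = (\<Sum>(j,k)\<in>{(j,k). j + k \<le> m}. u j k)"
  proof -
    have "{(j,k). j + k \<le> m} = Sigma {..m} (\<lambda>j. {..m - j})" by auto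
    then show ?thesis by (simp add: sum.Sigma)
  qed
  also have "\<dots> = (\<Sum>s\<le>m. \<Sum>i\<le>s. u i (s - i))" by (rule sum.triangle_reindex_eq)
  also have "\<dots> = (\<Sum>s\<le>m. fact m / fact s * (1 + (-1))^s)"
  proof (rule sum.cong)
    fix s
    have "(\<Sum>i\<le>s. u i (s - i)) = (\<Sum>i\<le>s. fact m / fact s * (real (s choose i) * 1^i * (-1)^(s - i)))"
    proof (rule sum.cong)
      fix i assume "i \<in> {..s}"
      then have "real (s choose i) = fact s / (fact i * fact (s - i))" by (simp add: binomial_fact)
      then show "u i (s - i) = fact m / fact s * (real (s choose i) * 1^i * (-1)^(s - i))"
        by (simp add: u_def)
    qed simp
    also have "\<dots> = fact m / fact s * (1 + (-1))^s"
      by (simp only: binomial_ring[of "1::real" "-1" s] sum_distrib_left)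
    finally show "(\<Sum>i\<le>s. u i (s - i)) = fact m / fact s * (1 + (-1))^s" .
  qed simp
  also have "\<dots> = (\<Sum>s\<le>m. if s = 0 then fact m else 0)"
    by (rule sum.cong) auto
  also have "\<dots> = fact m" by simp
  finally show ?thesis by (metis of_int_eq_iff of_int_fact)
qed

definition der :: "'a set \<Rightarrow> ('a \<Rightarrow> 'a) set" where
  "der A = {p. p permutes A \<and> (\<forall>x\<in>A. p x \<noteq> x)}"

lemma permutes_partition:
  assumes "finite A"
  shows "card {p. p permutes A} = (\<Sum>F\<in>Pow A. card (der (A - F)))"
proof -
  have U: "{p. p permutes A} = (\<Union>F\<in>Pow A. der (A - F))"
  proof (rule set_eqI, rule iffI)
    fix p assume "p \<in> {p. p permutes A}"
    then have p: "p permutes A" by simp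
    define F where "F = {x\<in>A. p x = x}"
    have "p permutes (A - F)"
      using p unfolding permutes_def F_def by auto
    then have "p \<in> der (A - F)" by (auto simp: der_def F_def)
    moreover have "F \<in> Pow A" by (auto simp: F_def)
    ultimately show "p \<in> (\<Union>F\<in>Pow A. der (A - F))" by blast
  next
    fix p assume "p \<in> (\<Union>F\<in>Pow A. der (A - F))"
    then obtain F where "F \<subseteq> A" "p permutes (A - F)" by (auto simp: der_def)
    then show "p \<in> {p. p permutes A}" by (auto intro: permutes_subset)
  qed
  have fix_eq: "F = {x\<in>A. p x = x}" if "F \<subseteq> A" "p \<in> der (A - F)" for F p
    using that by (auto simp: der_def permutes_not_in)
  have D: "\<forall>F\<in>Pow A. \<forall>G\<in>Pow A. F \<noteq> G \<longrightarrow> der (A - F) \<inter> der (A - G) = {}"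
  proof (intro ballI impI)
    fix F G assume "F \<in> Pow A" "G \<in> Pow A" "F \<noteq> G"
    then show "der (A - F) \<inter> der (A - G) = {}" using fix_eq by blast
  qed
  have fin: "finite (der B)" if "finite B" for B :: "'a set"
    using finite_permutations[OF that] by (rule rev_finite_subset) (auto simp: der_def)
  show ?thesis unfolding U
    by (rule card_UN_disjoint[OF _ _ D]) (use assms fin in auto)
qed

lemma der_card:
  assumes "finite A"
  shows "int (card (der A)) = h (card A) (card A)"
  using assms
proof (induction "card A" arbitrary: A rule: less_induct)
  case less
  define m where "m = card A"
  have ih: "int (card (der (A - F))) = h (m - card F) (m - card F)" if "F \<in> Pow A" "F \<noteq> {}" for F
  proof -
    have fF: "finite F" using that less.prems finite_subset by auto
    have "card (A - F) = m - card F" using that less.prems by (simp add: m_def card_Diff_subset fF)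
    moreover have "card (A - F) < card A"
      using that less.prems fF by (metis Diff_empty Diff_eq_empty_iff PowD card_Diff_subset card_gt_0_iff diff_less
           finite_subset subset_empty)
    ultimately show ?thesis using less.hyps[of "A - F"] less.prems by simp
  qed
  have "fact m = int (card {p. p permutes A})" using card_permutations[OF m_def[symmetric] less.prems] by simp
  also have "\<dots> = (\<Sum>F\<in>Pow A. int (card (der (A - F))))"
    using permutes_partition[OF less.prems] by simp
  also have "\<dots> = int (card (der A)) + (\<Sum>F\<in>Pow A - {{}}. int (card (der (A - F))))"
    using less.prems by (subst sum.remove[of _ "{}"]) auto
  also have "(\<Sum>F\<in>Pow A - {{}}. int (card (der (A - F)))) = (\<Sum>F\<in>Pow A - {{}}. h (m - card F) (m - card F))"
    by (rule sum.cong) (use ih in auto)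
  finally have e1: "fact m = int (card (der A)) + (\<Sum>F\<in>Pow A - {{}}. h (m - card F) (m - card F))" .
  have "fact m = (\<Sum>F\<in>Pow A. h (m - card F) (m - card F))"
    using inversion[of m] sum_pow_card[OF less.prems, of "\<lambda>j. h (m - j) (m - j)"] by (simp add: m_def)
  also have "\<dots> = h m m + (\<Sum>F\<in>Pow A - {{}}. h (m - card F) (m - card F))"
    using less.prems by (subst sum.remove[of _ "{}"]) auto
  finally show ?case using e1 by (simp add: m_def)
qed


lemma h_Suc: "h m (Suc t) = h m t - h (m - 1) t"
proof -
  have A: "h m t = (\<Sum>j\<le>Suc t. (-1)^j * int (t choose j) * fact (m - j))"
    by (simp add: h_def)
  have B: "h m (Suc t) = (\<Sum>j\<le>Suc t. (-1)^j * int (t choose j) * fact (m - j))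
      + (\<Sum>j\<le>Suc t. (-1)^j * int (if j = 0 then 0 else t choose (j - 1)) * fact (m - j))"
    unfolding h_def sum.distrib[symmetric]
  proof (rule sum.cong)
    fix j show "(-1)^j * int (Suc t choose j) * fact (m - j) =
      (-1)^j * int (t choose j) * fact (m - j) + (-1)^j * int (if j = 0 then 0 else t choose (j - 1)) * fact (m - j)"
      by (cases j) (simp_all add: algebra_simps)
  qed simp
  have C: "(\<Sum>j\<le>Suc t. (-1)^j * int (if j = 0 then 0 else t choose (j - 1)) * fact (m - j)) = - h (m - 1) t"
  proof -
    define F where "F j = (-1)^j * int (if j = 0 then 0 else t choose (j - 1)) * (fact (m - j) :: int)" for j
    have "(\<Sum>j\<le>Suc t. F j) = F 0 + (\<Sum>j<Suc t. F (Suc j))" by (rule sum.atMost_shift)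
    also have "F 0 = 0" by (simp add: F_def)
    also have "(\<Sum>j<Suc t. F (Suc j)) = (\<Sum>j\<le>t. F (Suc j))" by (simp only: lessThan_Suc_atMost)
    also have "\<dots> = (\<Sum>j\<le>t. - ((-1)^j * int (t choose j) * fact (m - 1 - j)))"
    proof (rule sum.cong)
      fix j
      have "m - Suc j = m - 1 - j" by simp
      then show "F (Suc j) = - ((-1)^j * int (t choose j) * fact (m - 1 - j))" by (simp add: F_def)
    qed simp
    finally have "(\<Sum>j\<le>Suc t. F j) = (\<Sum>j\<le>t. - ((-1)^j * int (t choose j) * fact (m - 1 - j)))" by simp
    then have "(\<Sum>j\<le>Suc t. (-1)^j * int (if j = 0 then 0 else t choose (j - 1)) * fact (m - j))
       = (\<Sum>j\<le>t. - ((-1)^j * int (t choose j) * fact (m - 1 - j)))" by (simp only: F_def)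
    also have "\<dots> = - h (m - 1) t" by (simp add: h_def sum_negf)
    finally show ?thesis .
  qed
  show ?thesis using A B C by simp
qed

lemma E_0: "E m 0 = fact m"
  by (simp add: E_def nsucc_def card_perms)

lemma E_h: "t \<le> k \<Longrightarrow> int (E (Suc k) t) = h (Suc k) t"
proof (induction t arbitrary: k)
  case 0
  then show ?case by (simp add: E_0 h_def algebra_simps)
next
  case (Suc t)
  then obtain k' where k: "k = Suc k'" by (cases k) auto
  have "E (Suc k) t = E (Suc k) (Suc t) + E k t" using E_rec[of t k] Suc.prems by simp
  moreover have "int (E (Suc k) t) = h (Suc k) t" using Suc.IH[of k] Suc.prems by simp
  moreover have "int (E k t) = h k t" using Suc.IH[of k'] Suc.prems k by simp
  ultimately show ?case using h_Suc[of "Suc k" t] by simp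
qed

lemma E_tel: "s \<le> m \<Longrightarrow> int (E (Suc m) s) = fact (Suc m) - (\<Sum>t<s. int (E m t))"
proof (induction s)
  case 0
  then show ?case by (simp add: E_0 algebra_simps)
next
  case (Suc s)
  have "E (Suc m) s = E (Suc m) (Suc s) + E m s" using E_rec[of s m] Suc.prems by simp
  then show ?case using Suc by simp
qed

lemma a_list:
  "bv_avoid_count n 3 id {1} {1,3} = card {xs \<in> perms n. avoidL n xs}"
proof -
  let ?L = "\<lambda>\<pi>. map \<pi> [1..<Suc n]"
  let ?P = "{\<pi>. \<pi> permutes {1..n}}"
  have eq: "{\<pi>. \<pi> permutes {1..n} \<and> \<not> bv_contains n \<pi> 3 id {1} {1,3}} = {\<pi>\<in>?P. avoidL n (?L \<pi>)}"
  proof -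
    have iff: "\<not> bv_contains n \<pi> 3 id {1} {1,3} \<longleftrightarrow> avoidL n (?L \<pi>)" if "\<pi> permutes {1..n}" for \<pi>
      using cont_char[OF that] cont_list[OF that] by simp
    show ?thesis
    proof (rule set_eqI)
      fix \<pi> show "\<pi> \<in> {\<pi>. \<pi> permutes {1..n} \<and> \<not> bv_contains n \<pi> 3 id {1} {1,3}} \<longleftrightarrow> \<pi> \<in> {\<pi>\<in>?P. avoidL n (?L \<pi>)}"
        using iff[of \<pi>] by blast
    qed
  qed
  have "?L ` {\<pi>\<in>?P. avoidL n (?L \<pi>)} = {xs \<in> ?L ` ?P. avoidL n xs}" by auto
  also have "\<dots> = {xs \<in> perms n. avoidL n xs}" using L_image by simp
  finally have im: "?L ` {\<pi>\<in>?P. avoidL n (?L \<pi>)} = {xs \<in> perms n. avoidL n xs}" .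
  have "inj_on ?L {\<pi>\<in>?P. avoidL n (?L \<pi>)}" by (rule inj_on_subset[OF L_inj]) auto
  then have "card (?L ` {\<pi>\<in>?P. avoidL n (?L \<pi>)}) = card {\<pi>\<in>?P. avoidL n (?L \<pi>)}" by (rule card_image)
  then show ?thesis unfolding bv_avoid_count_def eq im by simp
qed

lemma a_val: "int (bv_avoid_count (Suc m) 3 id {1} {1,3}) = fact m + fact (Suc m) - h (Suc m) m"
proof -
  define A where "A = bv_avoid_count (Suc m) 3 id {1} {1,3}"
  have "A = (\<Sum>p<Suc m. E m (p - 1))"
    using a_list avoid_split unfolding A_def by simp
  also have "\<dots> = E m 0 + (\<Sum>t<m. E m t)" by (subst sum.lessThan_Suc_shift) simp
  finally have "int A = fact m + (\<Sum>t<m. int (E m t))"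
    by (simp add: E_0)
  also have "(\<Sum>t<m. int (E m t)) = fact (Suc m) - int (E (Suc m) m)" using E_tel[of m m] by simp
  also have "int (E (Suc m) m) = h (Suc m) m" using E_h by simp
  finally have "int A = fact m + (fact (Suc m) - h (Suc m) m)" .
  then show ?thesis unfolding A_def by linarith
qed

lemma dd_rec: "h (Suc m) (Suc m) = int (Suc m) * h m m + (-1)^(Suc m)"
proof -
  define S where "S = (\<Sum>k\<le>m. (-1)^k / fact k :: real)"
  have s: "(\<Sum>k\<le>Suc m. (-1)^k / fact k :: real) = S + (-1)^Suc m / fact (Suc m)" by (simp add: S_def)
  have "real_of_int (h (Suc m) (Suc m)) = fact (Suc m) * S + fact (Suc m) * ((-1)^Suc m / fact (Suc m))"
    unfolding h_real s by (simp only: distrib_left)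
  also have "fact (Suc m) * ((-1)^Suc m / fact (Suc m)) = ((-1)^Suc m :: real)" by (simp del: fact_Suc)
  also have "fact (Suc m) * S = real (Suc m) * real_of_int (h m m)" by (simp add: h_real S_def fact_Suc)
  finally have "real_of_int (h (Suc m) (Suc m)) = real (Suc m) * real_of_int (h m m) + (-1)^(Suc m)" .
  then have "real_of_int (h (Suc m) (Suc m)) = real_of_int (int (Suc m) * h m m + (-1)^(Suc m))" by simp
  then show ?thesis by (rule of_int_eq_iff[THEN iffD1])
qed

lemma nonder: "int (non_derangements m) = fact m - h m m"
proof -
  have "{\<pi>. \<pi> permutes {1..m} \<and> (\<exists>i\<in>{1..m}. \<pi> i = i)} = {\<pi>. \<pi> permutes {1..m}} - der {1..m}"
    by (auto simp: der_def)
  moreover have "der {1..m} \<subseteq> {\<pi>. \<pi> permutes {1..m}}" by (auto simp: der_def)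
  moreover have "finite (der {1..m})"
    using finite_permutations[of "{1..m}"] by (rule rev_finite_subset) (auto simp: der_def)
  ultimately have "non_derangements m = card {\<pi>. \<pi> permutes {1..m}} - card (der {1..m})"
    unfolding non_derangements_def by (simp add: card_Diff_subset)
  moreover have "card (der {1..m}) \<le> card {\<pi>. \<pi> permutes {1..m}}"
    by (rule card_mono) (auto simp: der_def finite_permutations)
  ultimately show ?thesis using der_card[of "{1..m}"] card_permutations[of "{1..m}" m] by simp
qed


lemma a_cc: "int (bv_avoid_count (Suc m) 3 id {1} {1,3}) = (fact (Suc m) - h (Suc m) (Suc m)) + (fact m - h m m)"
  using a_val[of m] h_Suc[of "Suc m" m] by simp

lemma cc_rec: "fact (Suc (Suc m)) - h (Suc (Suc m)) (Suc (Suc m))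
   = int (Suc m) * ((fact (Suc m) - h (Suc m) (Suc m)) + (fact m - h m m))"
proof -
  have d1: "h (Suc (Suc m)) (Suc (Suc m)) = int (Suc (Suc m)) * h (Suc m) (Suc m) + (-1)^m"
    using dd_rec[of "Suc m"] by simp
  have d2: "h (Suc m) (Suc m) = int (Suc m) * h m m - (-1)^m"
    using dd_rec[of m] by simp
  have f: "(fact (Suc (Suc m)) :: int) = int (Suc m) * (fact (Suc m) + fact m)"
    by (simp add: algebra_simps)
  show ?thesis unfolding f d1 d2 by (simp add: algebra_simps)
qed

lemma F3: "fact (Suc m) - h (Suc m) m = (\<Sum>k=0..<m. (-1)^(Suc m - k) * int (fact (k+1)) * int (m choose k))"
proof -
  define G where "G j = (-1)^j * int (m choose j) * (fact (Suc m - j) :: int)" for j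
  have "h (Suc m) m = (\<Sum>j\<le>m. G j)" by (simp add: h_def G_def)
  also have "\<dots> = G 0 + (\<Sum>j<m. G (Suc j))" by (rule sum.atMost_shift)
  finally have "fact (Suc m) - h (Suc m) m = (\<Sum>j<m. - G (Suc j))"
    by (simp add: G_def sum_negf)
  also have "\<dots> = (\<Sum>j<m. (\<lambda>k. (-1)^(Suc m - k) * int (fact (k+1)) * int (m choose k)) (m - Suc j))"
  proof (rule sum.cong)
    fix j assume "j \<in> {..<m}"
    then have j: "j < m" by simp
    have e1: "Suc m - (m - Suc j) = Suc (Suc j)" using j by simp
    have e2: "m - Suc j + 1 = m - j" using j by simp
    have sj: "Suc j \<le> m" using j by simp
    have e3: "m choose (m - Suc j) = m choose (Suc j)" using binomial_symmetric[OF sj] by simp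
    show "- G (Suc j) = (\<lambda>k. (-1)^(Suc m - k) * int (fact (k+1)) * int (m choose k)) (m - Suc j)"
      unfolding G_def e1 e2 e3 by simp
  qed simp
  also have "\<dots> = (\<Sum>k<m. (-1)^(Suc m - k) * int (fact (k+1)) * int (m choose k))"
    by (rule sum.nat_diff_reindex)
  finally show ?thesis by (simp only: atLeast0LessThan)
qed

theorem mainTheorem13:
  fixes a c :: "nat \<Rightarrow> nat"
  defines "a \<equiv> (\<lambda>n. bv_avoid_count n 3 id {1} {1, 3})"
      and "c \<equiv> non_derangements"
  shows "a 1 = 1 \<and> a 2 = 2
    \<and> (\<forall>n>2. a n = (n - 1) * a (n - 1) + (n - 2) * a (n - 2))
    \<and> (\<forall>n\<ge>1. int (a n) = int (fact (n - 1))
            + (\<Sum>k=0..<n-1. (-1) ^ (n - k) * int (fact (k + 1)) * int ((n - 1) choose k)))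
    \<and> (\<forall>n\<ge>1. real (a n) = real (c (n + 1)) / real n)
    \<and> (\<forall>n\<ge>1. a n = c n + c (n - 1))
    \<and> (\<forall>m. real (c m) = fact m * (1 - (\<Sum>k=0..m. (-1) ^ k / fact k)))
    \<and> c 0 = 0"
proof -
  define C where "C m = (fact m - h m m :: int)" for m
  have A: "int (a (Suc m)) = C (Suc m) + C m" for m
    using a_cc[of m] by (simp add: a_def C_def)
  have Cc: "int (c m) = C m" for m using nonder[of m] by (simp add: c_def C_def)
  have R: "C (Suc (Suc m)) = int (Suc m) * (C (Suc m) + C m)" for m
    using cc_rec[of m] by (simp add: C_def)
  have h00: "h 0 0 = 1" by (simp add: h_def)
  have h11: "h 1 1 = 0" using dd_rec[of 0] h00 by simp
  have h22: "h 2 2 = 1" using dd_rec[of 1] h11 by (simp add: numeral_2_eq_2)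
  have C0: "C 0 = 0" using h00 by (simp add: C_def)
  have C1: "C 1 = 1" using h11 by (simp add: C_def)
  have C2: "C 2 = 1" using h22 by (simp add: C_def)
  have a1: "a 1 = 1"
  proof -
    have "int (a 1) = 1" using A[of 0] C0 C1 by simp
    then show ?thesis by simp
  qed
  have a2: "a 2 = 2"
  proof -
    have "int (a 2) = 2" using A[of 1] C1 C2 by (simp add: numeral_2_eq_2)
    then show ?thesis by simp
  qed
  have rec: "\<forall>n>2. a n = (n - 1) * a (n - 1) + (n - 2) * a (n - 2)"
  proof (intro allI impI)
    fix n :: nat assume n2: "n > 2"
    define k where "k = n - 3"
    have n: "n = Suc (Suc (Suc k))" using n2 by (simp add: k_def)
    have "int (a n) = C (Suc (Suc (Suc k))) + C (Suc (Suc k))" using A[of "Suc (Suc k)"] n by simp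
    also have "\<dots> = int (Suc (Suc k)) * (C (Suc (Suc k)) + C (Suc k)) + int (Suc k) * (C (Suc k) + C k)"
      using R[of "Suc k"] R[of k] by simp
    also have "\<dots> = int ((n - 1) * a (n - 1) + (n - 2) * a (n - 2))"
      using A[of "Suc k"] A[of k] n by (simp add: algebra_simps)
    finally show "a n = (n - 1) * a (n - 1) + (n - 2) * a (n - 2)" by (rule of_nat_eq_iff[THEN iffD1])
  qed
  have form: "\<forall>n\<ge>1. int (a n) = int (fact (n - 1))
            + (\<Sum>k=0..<n-1. (-1) ^ (n - k) * int (fact (k + 1)) * int ((n - 1) choose k))"
  proof (intro allI impI)
    fix n :: nat assume "n \<ge> 1"
    then obtain m where n: "n = Suc m" by (cases n) auto
    show "int (a n) = int (fact (n - 1))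
            + (\<Sum>k=0..<n-1. (-1) ^ (n - k) * int (fact (k + 1)) * int ((n - 1) choose k))"
      using a_val[of m] F3[of m] n by (simp add: a_def)
  qed
  have ac: "\<forall>n\<ge>1. a n = c n + c (n - 1)"
  proof (intro allI impI)
    fix n :: nat assume "n \<ge> 1"
    then obtain m where n: "n = Suc m" by (cases n) auto
    have "int (a n) = int (c n + c (n - 1))" using A[of m] Cc[of n] Cc[of m] n by simp
    then show "a n = c n + c (n - 1)" by (rule of_nat_eq_iff[THEN iffD1])
  qed
  have ratio: "\<forall>n\<ge>1. real (a n) = real (c (n + 1)) / real n"
  proof (intro allI impI)
    fix n :: nat assume "n \<ge> 1"
    then obtain m where n: "n = Suc m" by (cases n) auto
    have "int (c (n + 1)) = int (n * a n)" using Cc[of "Suc (Suc m)"] R[of m] A[of m] n by (simp add: algebra_simps)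
    then have "c (n + 1) = n * a n" by (rule of_nat_eq_iff[THEN iffD1])
    then have "real (c (n + 1)) = real n * real (a n)" by simp
    moreover have "real n \<noteq> 0" using n by simp
    ultimately show "real (a n) = real (c (n + 1)) / real n" by (simp add: field_simps)
  qed
  have cform: "\<forall>m. real (c m) = fact m * (1 - (\<Sum>k=0..m. (-1) ^ k / fact k))"
  proof
    fix m
    have "real (c m) = real_of_int (int (c m))" by simp
    also have "\<dots> = fact m - real_of_int (h m m)" using Cc[of m] by (simp add: C_def)
    also have "\<dots> = fact m * (1 - (\<Sum>k=0..m. (-1) ^ k / fact k))"
      by (simp add: h_real atLeast0AtMost algebra_simps)
    finally show "real (c m) = fact m * (1 - (\<Sum>k=0..m. (-1) ^ k / fact k))" .
  qed
  have c0: "c 0 = 0" using Cc[of 0] C0 by simp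
  show ?thesis using a1 a2 rec form ratio ac cform c0 by blast
qed
end
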